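(* Consider the Qs predictor with queue capacity $1$ processing an arbitrary sequence of items $o^{(1)},o^{(2)},\dots$, with probability estimate $Q^{(t)}(i)=1/Y_i^{(t)}$ for every item $i$ that has a counter at time $t$. Then at every time $t\ge2$: (1) for every item $i$ with a counter, $Y_i^{(t)}=1$ if $i=o^{(t-1)}$, and otherwise $Y_i^{(t)}=Y_i^{(t-1)}+1$; (2) there is exactly one item with $Y_i^{(t)}=1$ (equivalently $Q^{(t)}(i)=1$), namely $o^{(t-1)}$, and for every integer $k\ge2$ there is at most one item with $Y_i^{(t)}=k$ (equivalently $Q^{(t)}(i)=1/k$); (3) for every threshold $p>0$, $N(Q^{(t)},p)<1/p$, where $N(Q,p):=|\{i: Q(i)>p\}|$.
   Context: The Qs predictor with queue capacity $1$ keeps, for each item it has observed, a single counter. At each time $t$ (after predicting), it observes $o^{(t)}$ and updates: the counter of $o^{(t)}$ is set to $1$ (created if absent), and the counter of every other item already having a counter is incremented by $1$; no counters are removed. $Y_i^{(t)}$ denotes the value of item $i$'s counter at time $t$, i.e. after the update at time $t-1$ and before the update at time $t$. Items without a counter have estimate $0$. *)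

theory Defs
  imports Complex_Main
begin

text \<open>None = item has no counter.\<close>
definition qs_update :: "('a \<Rightarrow> nat option) \<Rightarrow> 'a \<Rightarrow> ('a \<Rightarrow> nat option)" where
  "qs_update Y x = (\<lambda>i. if i = x then Some 1 else map_option Suc (Y i))"

text \<open>qs_Y obs t = counters at time t (t \<ge> 1), i.e. after the updates with
  obs 1, ..., obs (t-1); at time 1 there are no counters. obs 0 is unused.\<close>
fun qs_Y :: "(nat \<Rightarrow> 'a) \<Rightarrow> nat \<Rightarrow> ('a \<Rightarrow> nat option)" where
  "qs_Y obs 0 = (\<lambda>_. None)"
| "qs_Y obs (Suc 0) = (\<lambda>_. None)"
| "qs_Y obs (Suc (Suc t)) = qs_update (qs_Y obs (Suc t)) (obs (Suc t))"

definition qs_Q :: "(nat \<Rightarrow> 'a) \<Rightarrow> nat \<Rightarrow> 'a \<Rightarrow> real" where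
  "qs_Q obs t i = (case qs_Y obs t i of None \<Rightarrow> 0 | Some y \<Rightarrow> 1 / real y)"

definition N_above :: "('a \<Rightarrow> real) \<Rightarrow> real \<Rightarrow> nat" where
  "N_above Q p = card {i. Q i > p}"

end

theory Submission
  imports Defs
begin

lemma qsY_inv:
  "qs_Y obs (Suc n) i = Some k \<Longrightarrow> 1 \<le> k \<and> k \<le> n \<and> i = obs (Suc n - k)"
proof (induction n arbitrary: i k)
  case 0
  then show ?case by simp
next
  case (Suc m)
  show ?case
  proof (cases "i = obs (Suc m)")
    case True
    then have "k = 1" using Suc.prems by (simp add: qs_update_def)
    then show ?thesis using True Suc.prems by simp
  next
    case False
    then obtain k' where k': "qs_Y obs (Suc m) i = Some k'" "k = Suc k'"
      using Suc.prems by (auto simp: qs_update_def)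
    from Suc.IH[OF k'(1)] k'(2) show ?thesis by auto
  qed
qed

lemma qsY_inv2:
  assumes "t \<ge> 2" "qs_Y obs t i = Some k"
  shows "1 \<le> k \<and> k < t \<and> i = obs (t - k)"
proof -
  obtain n where n: "t = Suc n" using assms(1) by (cases t) auto
  show ?thesis using qsY_inv[of obs n i k] assms(2) n by auto
qed

lemma card_small:
  fixes p :: real
  assumes "p > 0"
  shows "real (card {y::nat. 1 \<le> y \<and> real y < 1 / p}) < 1 / p"
proof -
  let ?S = "{y::nat. 1 \<le> y \<and> real y < 1 / p}"
  have fin: "finite ?S"
  proof (rule finite_subset)
    show "?S \<subseteq> {..nat \<lceil>1/p\<rceil>}"
      by auto (metis of_nat_le_iff le_nat_iff less_le_not_le real_nat_ceiling_ge order_trans less_imp_le nat_ceiling_le_eq)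
  qed simp
  show ?thesis
  proof (cases "?S = {}")
    case True
    then have "card ?S = 0" by (simp only: card.empty)
    then show ?thesis using assms by simp
  next
    case False
    let ?m = "Max ?S"
    have mS: "?m \<in> ?S" using Max_in[OF fin False] .
    have "?S \<subseteq> {1..?m}" using Max_ge[OF fin] by auto
    hence "card ?S \<le> ?m" using card_mono[of "{1..?m}" ?S] by simp
    thus ?thesis using mS by (smt (verit) mem_Collect_eq of_nat_le_iff)
  qed
qed

theorem lemma12:
  fixes obs :: "nat \<Rightarrow> 'a" and t :: nat
  assumes "t \<ge> 2"
  shows "(\<forall>i. qs_Y obs t i \<noteq> None \<longrightarrow>
            (i = obs (t - 1) \<longrightarrow> qs_Y obs t i = Some 1) \<and>
            (i \<noteq> obs (t - 1) \<longrightarrow>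
               (\<exists>y. qs_Y obs (t - 1) i = Some y \<and> qs_Y obs t i = Some (y + 1))))
       \<and> {i. qs_Y obs t i = Some 1} = {obs (t - 1)}
       \<and> (\<forall>k::nat. k \<ge> 2 \<longrightarrow>
            (\<forall>i j. qs_Y obs t i = Some k \<and> qs_Y obs t j = Some k \<longrightarrow> i = j))
       \<and> (\<forall>p::real. p > 0 \<longrightarrow>
            finite {i. qs_Q obs t i > p} \<and> real (N_above (qs_Q obs t) p) < 1 / p)"
proof -
  obtain n where n: "t = Suc (Suc n)" using assms by (metis add_2_eq_Suc le_Suc_ex)
  have upd: "qs_Y obs t = qs_update (qs_Y obs (t - 1)) (obs (t - 1))"
    using n by simp
  have P1: "\<forall>i. qs_Y obs t i \<noteq> None \<longrightarrow>
            (i = obs (t - 1) \<longrightarrow> qs_Y obs t i = Some 1) \<and>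
            (i \<noteq> obs (t - 1) \<longrightarrow>
               (\<exists>y. qs_Y obs (t - 1) i = Some y \<and> qs_Y obs t i = Some (y + 1)))"
    unfolding upd qs_update_def by auto
  have nz: "qs_Y obs (t - 1) x \<noteq> Some 0" for x
    using qsY_inv[of obs n x 0] n by auto
  have P2: "{i. qs_Y obs t i = Some 1} = {obs (t - 1)}"
    unfolding upd qs_update_def using nz by auto
  have P3: "\<forall>k::nat. k \<ge> 2 \<longrightarrow>
            (\<forall>i j. qs_Y obs t i = Some k \<and> qs_Y obs t j = Some k \<longrightarrow> i = j)"
    using qsY_inv2[OF assms] by metis
  have P4: "finite {i. qs_Q obs t i > p} \<and> real (N_above (qs_Q obs t) p) < 1 / p"
    if p: "p > 0" for p :: real
  proof -
    let ?S = "{y::nat. 1 \<le> y \<and> real y < 1 / p}"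
    have sub: "{i. qs_Q obs t i > p} \<subseteq> (\<lambda>y. obs (t - y)) ` ?S"
    proof
      fix i assume "i \<in> {i. qs_Q obs t i > p}"
      hence q: "qs_Q obs t i > p" by simp
      then obtain y where y: "qs_Y obs t i = Some y" "1 / real y > p"
        using p unfolding qs_Q_def by (auto split: option.splits)
      from qsY_inv2[OF assms y(1)] have yy: "1 \<le> y" "i = obs (t - y)" by auto
      have "real y > 0" using yy by simp
      hence "real y < 1 / p" using y(2) p by (simp add: field_simps)
      thus "i \<in> (\<lambda>y. obs (t - y)) ` ?S" using yy by auto
    qed
    have fin: "finite ?S"
      by (rule finite_subset[of _ "{..nat \<lceil>1/p\<rceil>}"]) (auto, linarith)
    have f: "finite {i. qs_Q obs t i > p}" using finite_subset[OF sub] fin by blast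
    have "card {i. qs_Q obs t i > p} \<le> card ?S"
      using card_mono[OF finite_imageI[OF fin] sub] card_image_le[OF fin, of "\<lambda>y. obs (t - y)"] by linarith
    hence "real (N_above (qs_Q obs t) p) \<le> real (card ?S)" unfolding N_above_def by simp
    thus ?thesis using card_small[OF p] f by linarith
  qed
  show ?thesis using P1 P2 P3 P4 by blast
qed

end
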